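(* For every term $t$ over $\Sigma_f(X)$, the equation $0\cdot t=0\cdot\sum_{x\in\mathsf{VAR}(t)}x$ is derivable in equational logic from $\mathsf{Md}_\bot$, where the empty sum is $0$.
   Context: $\Sigma_f$ is the signature with one sort, constants $0,1$, binary operations $+,\cdot$ and unary operation $-$; $\Sigma_{md,\bot}$ extends it with a constant $\bot$ and a unary operation $(\,\cdot\,)^{-1}$. $\Sigma_f(X)$ denotes terms over $\Sigma_f$ with variables from $X$, and $\mathsf{VAR}(t)$ is the set of variables occurring in $t$. $\mathsf{Md}_\bot$ is the set of $\Sigma_{md,\bot}$-equations (variables universally quantified): $(x+y)+z=x+(y+z)$; $x+y=y+x$; $x+0=x$; $x+(-x)=0\cdot x$; $(x\cdot y)\cdot z=x\cdot(y\cdot z)$; $x\cdot y=y\cdot x$; $1\cdot x=x$; $x\cdot(y+z)=x\cdot y+x\cdot z$; $-(-x)=x$; $0\cdot(x\cdot x)=0\cdot x$; $(x^{-1})^{-1}=x+0\cdot x^{-1}$; $x\cdot x^{-1}=1+0\cdot x^{-1}$; $(x\cdot y)^{-1}=x^{-1}\cdot y^{-1}$; $1^{-1}=1$; $0^{-1}=\bot$; $x+\bot=\bot$; $x\cdot\bot=\bot$. *)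

theory Defs
  imports Main
begin

datatype 'v trm =
    Var 'v
  | Zero
  | One
  | Add "'v trm" "'v trm"
  | Mul "'v trm" "'v trm"
  | Neg "'v trm"
  | Bot
  | Inv "'v trm"

fun is_f_term :: "'v trm \<Rightarrow> bool" where
  "is_f_term (Var x) = True"
| "is_f_term Zero = True"
| "is_f_term One = True"
| "is_f_term (Add s t) = (is_f_term s \<and> is_f_term t)"
| "is_f_term (Mul s t) = (is_f_term s \<and> is_f_term t)"
| "is_f_term (Neg s) = is_f_term s"
| "is_f_term Bot = False"
| "is_f_term (Inv s) = False"

fun VAR :: "'v trm \<Rightarrow> 'v set" where
  "VAR (Var x) = {x}"
| "VAR Zero = {}"
| "VAR One = {}"
| "VAR (Add s t) = VAR s \<union> VAR t"
| "VAR (Mul s t) = VAR s \<union> VAR t"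
| "VAR (Neg s) = VAR s"
| "VAR Bot = {}"
| "VAR (Inv s) = VAR s"

fun subst :: "('v \<Rightarrow> 'v trm) \<Rightarrow> 'v trm \<Rightarrow> 'v trm" where
  "subst \<sigma> (Var x) = \<sigma> x"
| "subst \<sigma> Zero = Zero"
| "subst \<sigma> One = One"
| "subst \<sigma> (Add s t) = Add (subst \<sigma> s) (subst \<sigma> t)"
| "subst \<sigma> (Mul s t) = Mul (subst \<sigma> s) (subst \<sigma> t)"
| "subst \<sigma> (Neg s) = Neg (subst \<sigma> s)"
| "subst \<sigma> Bot = Bot"
| "subst \<sigma> (Inv s) = Inv (subst \<sigma> s)"

definition Md_bot :: "('v \<times> 'v \<times> 'v) \<Rightarrow> ('v trm \<times> 'v trm) set" where
  "Md_bot xyz = (case xyz of (x0, y0, z0) \<Rightarrow>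
     (let x = Var x0; y = Var y0; z = Var z0 in
     { (Add (Add x y) z, Add x (Add y z)),
       (Add x y, Add y x),
       (Add x Zero, x),
       (Add x (Neg x), Mul Zero x),
       (Mul (Mul x y) z, Mul x (Mul y z)),
       (Mul x y, Mul y x),
       (Mul One x, x),
       (Mul x (Add y z), Add (Mul x y) (Mul x z)),
       (Neg (Neg x), x),
       (Mul Zero (Mul x x), Mul Zero x),
       (Inv (Inv x), Add x (Mul Zero (Inv x))),
       (Mul x (Inv x), Add One (Mul Zero (Inv x))),
       (Inv (Mul x y), Mul (Inv x) (Inv y)),
       (Inv One, One),
       (Inv Zero, Bot),
       (Add x Bot, Bot),
       (Mul x Bot, Bot) }))"

inductive derivable :: "('v trm \<times> 'v trm) set \<Rightarrow> 'v trm \<Rightarrow> 'v trm \<Rightarrow> bool"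
  for E where
  ax: "(s, t) \<in> E \<Longrightarrow> derivable E (subst \<sigma> s) (subst \<sigma> t)"
| refl: "derivable E t t"
| sym: "derivable E s t \<Longrightarrow> derivable E t s"
| trans: "derivable E s t \<Longrightarrow> derivable E t u \<Longrightarrow> derivable E s u"
| cong_Add: "derivable E s1 t1 \<Longrightarrow> derivable E s2 t2 \<Longrightarrow> derivable E (Add s1 s2) (Add t1 t2)"
| cong_Mul: "derivable E s1 t1 \<Longrightarrow> derivable E s2 t2 \<Longrightarrow> derivable E (Mul s1 s2) (Mul t1 t2)"
| cong_Neg: "derivable E s t \<Longrightarrow> derivable E (Neg s) (Neg t)"
| cong_Inv: "derivable E s t \<Longrightarrow> derivable E (Inv s) (Inv t)"

fun var_sum :: "'v list \<Rightarrow> 'v trm" where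
  "var_sum [] = Zero"
| "var_sum [x] = Var x"
| "var_sum (x # xs) = Add (Var x) (var_sum xs)"

end

theory Submission
  imports Defs
begin

lemma finite_VAR: "finite (VAR t)"
  by (induction t) auto

context
  fixes x y z :: 'v
  assumes d: "x \<noteq> y" "y \<noteq> z" "x \<noteq> z"
begin

abbreviation eqv (infix "\<approx>" 50) where "a \<approx> b \<equiv> derivable (Md_bot (x,y,z)) a b"

lemmas [trans] = derivable.trans

lemma inst:
  assumes "(s,t) \<in> Md_bot (x,y,z)"
  shows "subst (\<lambda>v. if v = x then a else if v = y then b else c) s \<approx>
         subst (\<lambda>v. if v = x then a else if v = y then b else c) t"
  using derivable.ax[OF assms] .

lemma A_assoc: "Add (Add a b) c \<approx> Add a (Add b c)"
proof -
  have "(Add (Add (Var x) (Var y)) (Var z), Add (Var x) (Add (Var y) (Var z))) \<in> Md_bot (x,y,z)" by (simp add: Md_bot_def Let_def)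
  from inst[OF this, where a=a and b=b and c=c] d show ?thesis by simp
qed
lemma A_comm: "Add a b \<approx> Add b a"
proof -
  have "(Add (Var x) (Var y), Add (Var y) (Var x)) \<in> Md_bot (x,y,z)" by (simp add: Md_bot_def Let_def)
  from inst[OF this, where a=a and b=b and c=a] d show ?thesis by simp
qed
lemma A_zero: "Add a Zero \<approx> a"
proof -
  have "(Add (Var x) Zero, Var x) \<in> Md_bot (x,y,z)" by (simp add: Md_bot_def Let_def)
  from inst[OF this, where a=a and b=a and c=a] d show ?thesis by simp
qed
lemma A_neg: "Add a (Neg a) \<approx> Mul Zero a"
proof -
  have "(Add (Var x) (Neg (Var x)), Mul Zero (Var x)) \<in> Md_bot (x,y,z)" by (simp add: Md_bot_def Let_def)
  from inst[OF this, where a=a and b=a and c=a] d show ?thesis by simp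
qed
lemma M_assoc: "Mul (Mul a b) c \<approx> Mul a (Mul b c)"
proof -
  have "(Mul (Mul (Var x) (Var y)) (Var z), Mul (Var x) (Mul (Var y) (Var z))) \<in> Md_bot (x,y,z)" by (simp add: Md_bot_def Let_def)
  from inst[OF this, where a=a and b=b and c=c] d show ?thesis by simp
qed
lemma M_comm: "Mul a b \<approx> Mul b a"
proof -
  have "(Mul (Var x) (Var y), Mul (Var y) (Var x)) \<in> Md_bot (x,y,z)" by (simp add: Md_bot_def Let_def)
  from inst[OF this, where a=a and b=b and c=a] d show ?thesis by simp
qed
lemma M_one: "Mul One a \<approx> a"
proof -
  have "(Mul One (Var x), Var x) \<in> Md_bot (x,y,z)" by (simp add: Md_bot_def Let_def)
  from inst[OF this, where a=a and b=a and c=a] d show ?thesis by simp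
qed
lemma distr: "Mul a (Add b c) \<approx> Add (Mul a b) (Mul a c)"
proof -
  have "(Mul (Var x) (Add (Var y) (Var z)), Add (Mul (Var x) (Var y)) (Mul (Var x) (Var z))) \<in> Md_bot (x,y,z)" by (simp add: Md_bot_def Let_def)
  from inst[OF this, where a=a and b=b and c=c] d show ?thesis by simp
qed
lemma negneg: "Neg (Neg a) \<approx> a"
proof -
  have "(Neg (Neg (Var x)), Var x) \<in> Md_bot (x,y,z)" by (simp add: Md_bot_def Let_def)
  from inst[OF this, where a=a and b=a and c=a] d show ?thesis by simp
qed
lemma zsq: "Mul Zero (Mul a a) \<approx> Mul Zero a"
proof -
  have "(Mul Zero (Mul (Var x) (Var x)), Mul Zero (Var x)) \<in> Md_bot (x,y,z)" by (simp add: Md_bot_def Let_def)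
  from inst[OF this, where a=a and b=a and c=a] d show ?thesis by simp
qed

lemma sy: "a \<approx> b \<Longrightarrow> b \<approx> a" by (rule derivable.sym)
lemma rf: "a \<approx> a" by (rule derivable.refl)
lemma cM: "b \<approx> b' \<Longrightarrow> Mul a b \<approx> Mul a b'" by (rule derivable.cong_Mul[OF rf])
lemma cM1: "b \<approx> b' \<Longrightarrow> Mul b a \<approx> Mul b' a" by (rule derivable.cong_Mul[OF _ rf])
lemma cA: "b \<approx> b' \<Longrightarrow> Add a b \<approx> Add a b'" by (rule derivable.cong_Add[OF rf])
lemma cA1: "b \<approx> b' \<Longrightarrow> Add b a \<approx> Add b' a" by (rule derivable.cong_Add[OF _ rf])
lemma cAA: "a \<approx> a' \<Longrightarrow> b \<approx> b' \<Longrightarrow> Add a b \<approx> Add a' b'" by (rule derivable.cong_Add)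

lemma D1: "Mul Zero One \<approx> Zero"
proof -
  have "Mul Zero One \<approx> Mul One Zero" by (rule M_comm)
  also have "\<dots> \<approx> Zero" by (rule M_one)
  finally show ?thesis .
qed

lemma D2: "Mul Zero (Neg a) \<approx> Mul Zero a"
proof -
  have "Mul Zero (Neg a) \<approx> Add (Neg a) (Neg (Neg a))" by (rule sy, rule A_neg)
  also have "\<dots> \<approx> Add (Neg a) a" by (rule cA, rule negneg)
  also have "\<dots> \<approx> Add a (Neg a)" by (rule A_comm)
  also have "\<dots> \<approx> Mul Zero a" by (rule A_neg)
  finally show ?thesis .
qed

lemma D3: "Mul Zero Zero \<approx> Zero"
proof -
  have "Add One (Neg One) \<approx> Zero" using A_neg D1 derivable.trans by blast
  hence "Mul Zero Zero \<approx> Mul Zero (Add One (Neg One))" by (rule sy[OF cM])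
  also have "\<dots> \<approx> Add (Mul Zero One) (Mul Zero (Neg One))" by (rule distr)
  also have "\<dots> \<approx> Add Zero Zero" by (rule cAA[OF D1], rule derivable.trans[OF D2 D1])
  also have "\<dots> \<approx> Zero" by (rule A_zero)
  finally show ?thesis .
qed

lemma D4: "Add (Mul Zero a) (Mul Zero a) \<approx> Mul Zero a"
proof -
  have "Add (Mul Zero a) (Mul Zero a) \<approx> Add (Mul a Zero) (Mul a Zero)" by (rule cAA; rule M_comm)
  also have "\<dots> \<approx> Mul a (Add Zero Zero)" by (rule sy, rule distr)
  also have "\<dots> \<approx> Mul a Zero" by (rule cM, rule A_zero)
  also have "\<dots> \<approx> Mul Zero a" by (rule M_comm)
  finally show ?thesis .
qed

lemma D5: "Mul Zero (Mul Zero a) \<approx> Mul Zero a"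
proof -
  have "Mul Zero (Mul Zero a) \<approx> Mul (Mul Zero Zero) a" by (rule sy, rule M_assoc)
  also have "\<dots> \<approx> Mul Zero a" by (rule cM1, rule D3)
  finally show ?thesis .
qed

lemma D6: "Mul Zero (Mul a b) \<approx> Add (Mul Zero (Mul a b)) (Mul Zero a)"
proof -
  have 1: "Mul a b \<approx> Add (Mul a b) (Mul Zero a)"
  proof -
    have "Mul a b \<approx> Mul a (Add b Zero)" by (rule cM, rule sy, rule A_zero)
    also have "\<dots> \<approx> Add (Mul a b) (Mul a Zero)" by (rule distr)
    also have "\<dots> \<approx> Add (Mul a b) (Mul Zero a)" by (rule cA, rule M_comm)
    finally show ?thesis .
  qed
  have "Mul Zero (Mul a b) \<approx> Mul Zero (Add (Mul a b) (Mul Zero a))" by (rule cM, rule 1)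
  also have "\<dots> \<approx> Add (Mul Zero (Mul a b)) (Mul Zero (Mul Zero a))" by (rule distr)
  also have "\<dots> \<approx> Add (Mul Zero (Mul a b)) (Mul Zero a)" by (rule cA, rule D5)
  finally show ?thesis .
qed

lemma D7: "Mul Zero (Mul a b) \<approx> Add (Mul Zero a) (Mul Zero b)"
proof -
  define p where "p = Mul Zero (Mul a b)"
  define A where "A = Mul Zero a"
  define B where "B = Mul Zero b"
  have pc: "Mul Zero (Mul b a) \<approx> p" unfolding p_def by (rule cM, rule M_comm)
  have pB: "p \<approx> Add p B"
  proof -
    have "p \<approx> Mul Zero (Mul b a)" by (rule sy, rule pc)
    also have "\<dots> \<approx> Add (Mul Zero (Mul b a)) B" unfolding B_def by (rule D6)
    also have "\<dots> \<approx> Add p B" by (rule cA1, rule pc)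
    finally show ?thesis .
  qed
  have p1: "p \<approx> Add (Add A B) p"
  proof -
    have "p \<approx> Add p A" unfolding p_def A_def by (rule D6)
    also have "\<dots> \<approx> Add (Add p B) A" by (rule cA1, rule pB)
    also have "\<dots> \<approx> Add p (Add B A)" by (rule A_assoc)
    also have "\<dots> \<approx> Add p (Add A B)" by (rule cA, rule A_comm)
    also have "\<dots> \<approx> Add (Add A B) p" by (rule A_comm)
    finally show ?thesis .
  qed
  have qa: "Mul Zero (Mul (Add a b) a) \<approx> Add A p"
  proof -
    have "Mul Zero (Mul (Add a b) a) \<approx> Mul Zero (Mul a (Add a b))" by (rule cM, rule M_comm)
    also have "\<dots> \<approx> Mul Zero (Add (Mul a a) (Mul a b))" by (rule cM, rule distr)
    also have "\<dots> \<approx> Add (Mul Zero (Mul a a)) p" unfolding p_def by (rule distr)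
    also have "\<dots> \<approx> Add A p" unfolding A_def by (rule cA1, rule zsq)
    finally show ?thesis .
  qed
  have qb: "Mul Zero (Mul (Add a b) b) \<approx> Add p B"
  proof -
    have "Mul Zero (Mul (Add a b) b) \<approx> Mul Zero (Mul b (Add a b))" by (rule cM, rule M_comm)
    also have "\<dots> \<approx> Mul Zero (Add (Mul b a) (Mul b b))" by (rule cM, rule distr)
    also have "\<dots> \<approx> Add (Mul Zero (Mul b a)) (Mul Zero (Mul b b))" by (rule distr)
    also have "\<dots> \<approx> Add p B" unfolding B_def by (rule cAA[OF pc], rule zsq)
    finally show ?thesis .
  qed
  have p2: "Add A B \<approx> Add (Add A B) p"
  proof -
    have "Add A B \<approx> Mul Zero (Add a b)" unfolding A_def B_def by (rule sy, rule distr)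
    also have "\<dots> \<approx> Mul Zero (Mul (Add a b) (Add a b))" by (rule sy, rule zsq)
    also have "\<dots> \<approx> Mul Zero (Add (Mul (Add a b) a) (Mul (Add a b) b))" by (rule cM, rule distr)
    also have "\<dots> \<approx> Add (Mul Zero (Mul (Add a b) a)) (Mul Zero (Mul (Add a b) b))" by (rule distr)
    also have "\<dots> \<approx> Add (Add A p) (Add p B)" by (rule cAA[OF qa qb])
    also have "\<dots> \<approx> Add A (Add p (Add p B))" by (rule A_assoc)
    also have "\<dots> \<approx> Add A (Add (Add p p) B)" by (rule cA, rule sy, rule A_assoc)
    also have "\<dots> \<approx> Add A (Add p B)" unfolding p_def by (rule cA, rule cA1, rule D4)
    also have "\<dots> \<approx> Add A (Add B p)" by (rule cA, rule A_comm)
    also have "\<dots> \<approx> Add (Add A B) p" by (rule sy, rule A_assoc)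
    finally show ?thesis .
  qed
  have "p \<approx> Add A B" using p1 sy[OF p2] derivable.trans by blast
  thus ?thesis unfolding p_def A_def B_def .
qed

abbreviation P where "P l \<equiv> Mul Zero (var_sum l)"

lemma P_nil: "P [] \<approx> Zero" using D3 by simp

lemma zero_add: "Add Zero a \<approx> a"
  using A_comm A_zero derivable.trans by blast

lemma P_cons: "P (v # l) \<approx> Add (Mul Zero (Var v)) (P l)"
proof (cases l)
  case Nil
  have "Mul Zero (Var v) \<approx> Add (Mul Zero (Var v)) Zero" by (rule sy, rule A_zero)
  also have "\<dots> \<approx> Add (Mul Zero (Var v)) (P [])" by (rule cA, rule sy, rule P_nil)
  finally show ?thesis using Nil by simp
next
  case (Cons w l')
  then show ?thesis by (simp add: distr)
qed

lemma absorb: "v \<in> set l \<Longrightarrow> P l \<approx> Add (P l) (Mul Zero (Var v))"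
proof (induction l)
  case Nil then show ?case by simp
next
  case (Cons w l)
  let ?w = "Mul Zero (Var w)"
  show ?case
  proof (cases "v = w")
    case True
    have "P (w # l) \<approx> Add ?w (P l)" by (rule P_cons)
    also have "\<dots> \<approx> Add (Add ?w ?w) (P l)" by (rule cA1, rule sy, rule D4)
    also have "\<dots> \<approx> Add ?w (Add ?w (P l))" by (rule A_assoc)
    also have "\<dots> \<approx> Add (Add ?w (P l)) ?w" by (rule A_comm)
    also have "\<dots> \<approx> Add (P (w # l)) ?w" by (rule cA1, rule sy, rule P_cons)
    finally show ?thesis using True by simp
  next
    case False
    with Cons have ih: "P l \<approx> Add (P l) (Mul Zero (Var v))" by simp
    have "P (w # l) \<approx> Add ?w (P l)" by (rule P_cons)
    also have "\<dots> \<approx> Add ?w (Add (P l) (Mul Zero (Var v)))" by (rule cA, rule ih)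
    also have "\<dots> \<approx> Add (Add ?w (P l)) (Mul Zero (Var v))" by (rule sy, rule A_assoc)
    also have "\<dots> \<approx> Add (P (w # l)) (Mul Zero (Var v))" by (rule cA1, rule sy, rule P_cons)
    finally show ?thesis .
  qed
qed

lemma subset_abs: "set l1 \<subseteq> set l2 \<Longrightarrow> Add (P l2) (P l1) \<approx> P l2"
proof (induction l1)
  case Nil
  have "Add (P l2) (P []) \<approx> Add (P l2) Zero" by (rule cA, rule P_nil)
  also have "\<dots> \<approx> P l2" by (rule A_zero)
  finally show ?case .
next
  case (Cons v l1)
  hence ih: "Add (P l2) (P l1) \<approx> P l2" and v: "v \<in> set l2" by auto
  have "Add (P l2) (P (v # l1)) \<approx> Add (P l2) (Add (Mul Zero (Var v)) (P l1))" by (rule cA, rule P_cons)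
  also have "\<dots> \<approx> Add (Add (P l2) (Mul Zero (Var v))) (P l1)" by (rule sy, rule A_assoc)
  also have "\<dots> \<approx> Add (P l2) (P l1)" by (rule cA1, rule sy, rule absorb[OF v])
  also have "\<dots> \<approx> P l2" by (rule ih)
  finally show ?case .
qed

lemma set_eq: "set l1 = set l2 \<Longrightarrow> P l1 \<approx> P l2"
proof -
  assume s: "set l1 = set l2"
  have "P l1 \<approx> Add (P l1) (P l2)" by (rule sy, rule subset_abs, simp add: s)
  also have "\<dots> \<approx> Add (P l2) (P l1)" by (rule A_comm)
  also have "\<dots> \<approx> P l2" by (rule subset_abs, simp add: s)
  finally show ?thesis .
qed

lemma P_app: "P (l1 @ l2) \<approx> Add (P l1) (P l2)"
proof (induction l1)
  case Nil
  have "P ([] @ l2) \<approx> Add Zero (P l2)" by (simp, rule sy, rule zero_add)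
  also have "\<dots> \<approx> Add (P []) (P l2)" by (rule cA1, rule sy, rule P_nil)
  finally show ?case .
next
  case (Cons v l1)
  have "P ((v # l1) @ l2) \<approx> Add (Mul Zero (Var v)) (P (l1 @ l2))" using P_cons by simp
  also have "\<dots> \<approx> Add (Mul Zero (Var v)) (Add (P l1) (P l2))" by (rule cA, rule Cons)
  also have "\<dots> \<approx> Add (Add (Mul Zero (Var v)) (P l1)) (P l2)" by (rule sy, rule A_assoc)
  also have "\<dots> \<approx> Add (P (v # l1)) (P l2)" by (rule cA1, rule sy, rule P_cons)
  finally show ?case .
qed

lemma main: "is_f_term t \<Longrightarrow> set l = VAR t \<Longrightarrow> Mul Zero t \<approx> P l"
proof (induction t arbitrary: l)
  case (Var v)
  have "Mul Zero (Var v) \<approx> P [v]" by (simp add: rf)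
  also have "\<dots> \<approx> P l" by (rule set_eq, use Var in simp)
  finally show ?case .
next
  case Zero
  have "Mul Zero Zero \<approx> P []" by (simp add: rf)
  also have "\<dots> \<approx> P l" by (rule set_eq, use Zero in simp)
  finally show ?case .
next
  case One
  have "Mul Zero One \<approx> Zero" by (rule D1)
  also have "\<dots> \<approx> P []" by (rule sy, rule P_nil)
  also have "\<dots> \<approx> P l" by (rule set_eq, use One in simp)
  finally show ?case .
next
  case (Add s t)
  obtain ls lt where ls: "set ls = VAR s" and lt: "set lt = VAR t"
    using finite_list[OF finite_VAR] by metis
  have "Mul Zero (Add s t) \<approx> Add (Mul Zero s) (Mul Zero t)" by (rule distr)
  also have "\<dots> \<approx> Add (P ls) (P lt)" using Add ls lt by (intro cAA) auto
  also have "\<dots> \<approx> P (ls @ lt)" by (rule sy, rule P_app)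
  also have "\<dots> \<approx> P l" by (rule set_eq, use Add ls lt in simp)
  finally show ?case .
next
  case (Mul s t)
  obtain ls lt where ls: "set ls = VAR s" and lt: "set lt = VAR t"
    using finite_list[OF finite_VAR] by metis
  have "Mul Zero (Mul s t) \<approx> Add (Mul Zero s) (Mul Zero t)" by (rule D7)
  also have "\<dots> \<approx> Add (P ls) (P lt)" using Mul ls lt by (intro cAA) auto
  also have "\<dots> \<approx> P (ls @ lt)" by (rule sy, rule P_app)
  also have "\<dots> \<approx> P l" by (rule set_eq, use Mul ls lt in simp)
  finally show ?case .
next
  case (Neg s)
  have "Mul Zero (Neg s) \<approx> Mul Zero s" by (rule D2)
  also have "\<dots> \<approx> P l" using Neg by simp
  finally show ?case .
qed simp_all

end

theorem proposition2p4:
  fixes t :: "'v trm" and x y z :: 'v and xs :: "'v list"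
  assumes "x \<noteq> y" and "y \<noteq> z" and "x \<noteq> z"
    and "is_f_term t"
    and "distinct xs" and "set xs = VAR t"
  shows "derivable (Md_bot (x, y, z)) (Mul Zero t) (Mul Zero (var_sum xs))"
  using main[OF assms(1-3) assms(4) assms(6)] .

end
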